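(* Let $\lambda,\mu,\rho$ be partitions of $n$ with $I,J,K$ parts respectively, and let $P$ be the swap Markov chain on $\mathcal{T}_{\lambda,\mu,\rho}$ defined in the context. Then $P$ is connected (irreducible) on $\mathcal{T}_{\lambda,\mu,\rho}$ and reversible with respect to \[ \pi_{\lambda,\mu,\rho}(T)=\frac1{n!}\prod_{i,j,k}\frac{\lambda_i!\,\mu_j!\,\rho_k!}{T_{ijk}!}. \]
   Context: $\mathcal{T}_{\lambda,\mu,\rho}$ is the set of arrays $T=(T_{ijk})_{1\le i\le I,1\le j\le J,1\le k\le K}$ of nonnegative integers with $\sum_{j,k}T_{ijk}=\lambda_i$, $\sum_{i,k}T_{ijk}=\mu_j$, $\sum_{i,j}T_{ijk}=\rho_k$ for all $i,j,k$. Represent $T$ as a multiset of $n$ triples $(i,j,k)$, with $T_{ijk}$ copies of $(i,j,k)$. One step of the chain: choose two of the $n$ triples independently and uniformly at random (possibly the same one), choose $r\in\{1,2,3\}$ uniformly, and swap the $r$-th coordinates of the two chosen triples; e.g. for $r=1$, $(i_1,j_1,k_1),(i_2,j_2,k_2)\mapsto(i_2,j_1,k_1),(i_1,j_2,k_2)$. Thus the move that removes one copy each of $(i_1,j_1,k_1)$ and $(i_2,j_2,k_2)$ and adds the swapped triples is made with probability $\frac13\cdot\frac{2T_{i_1j_1k_1}T_{i_2j_2k_2}}{n^2}$. Reversibility means $\pi(T)P(T,T')=\pi(T')P(T',T)$ for all $T,T'$. *)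

theory Defs
  imports Complex_Main "HOL-Library.Multiset"
begin

type_synonym triple = "nat \<times> nat \<times> nat"

definition is_partition :: "nat \<Rightarrow> nat \<Rightarrow> (nat \<Rightarrow> nat) \<Rightarrow> bool" where
  "is_partition n I lam \<longleftrightarrow>
     (\<forall>i\<in>{1..I}. lam i > 0) \<and>
     (\<forall>i\<in>{1..I}. \<forall>i'\<in>{1..I}. i \<le> i' \<longrightarrow> lam i' \<le> lam i) \<and>
     (\<Sum>i=1..I. lam i) = n"

text \<open>The array T is represented as the multiset of triples (i,j,k), with
  count T (i,j,k) = T_ijk copies.\<close>
definition tables ::
  "nat \<Rightarrow> (nat \<Rightarrow> nat) \<Rightarrow> nat \<Rightarrow> (nat \<Rightarrow> nat) \<Rightarrow> nat \<Rightarrow> (nat \<Rightarrow> nat) \<Rightarrow> triple multiset set" where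
  "tables I lam J mu K rho =
     {T. (\<forall>(i,j,k)\<in>#T. i \<in> {1..I} \<and> j \<in> {1..J} \<and> k \<in> {1..K}) \<and>
         (\<forall>i\<in>{1..I}. (\<Sum>j=1..J. \<Sum>k=1..K. count T (i,j,k)) = lam i) \<and>
         (\<forall>j\<in>{1..J}. (\<Sum>i=1..I. \<Sum>k=1..K. count T (i,j,k)) = mu j) \<and>
         (\<forall>k\<in>{1..K}. (\<Sum>i=1..I. \<Sum>j=1..J. count T (i,j,k)) = rho k)}"

fun swap_coord :: "nat \<Rightarrow> triple \<Rightarrow> triple \<Rightarrow> triple \<times> triple" where
  "swap_coord r (i1,j1,k1) (i2,j2,k2) =
     (if r = 1 then ((i2,j1,k1),(i1,j2,k2))
      else if r = 2 then ((i1,j2,k1),(i2,j1,k2))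
      else ((i1,j1,k2),(i2,j2,k1)))"

text \<open>Result of choosing one copy of t1 and one copy of t2 and swapping the r-th
  coordinates. If t1 = t2 the swap changes nothing (this also covers choosing
  the same copy twice).\<close>
definition swap_step :: "triple multiset \<Rightarrow> triple \<Rightarrow> triple \<Rightarrow> nat \<Rightarrow> triple multiset" where
  "swap_step T t1 t2 r =
     (if t1 = t2 then T
      else T - {#t1, t2#} + {#fst (swap_coord r t1 t2), snd (swap_coord r t1 t2)#})"

text \<open>Transition probability: the n^2 ordered choices of two copies (possibly the
  same) are grouped by their types (t1,t2), there being count T t1 * count T t2
  such choices; r is uniform on {1,2,3}.\<close>
definition swap_P :: "triple multiset \<Rightarrow> triple multiset \<Rightarrow> real" where
  "swap_P T T' =
     (\<Sum>t1\<in>set_mset T. \<Sum>t2\<in>set_mset T. \<Sum>r\<in>{1,2,3::nat}.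
        if swap_step T t1 t2 r = T' then real (count T t1 * count T t2) else 0)
     / (3 * real (size T) ^ 2)"

definition swap_pi ::
  "nat \<Rightarrow> (nat \<Rightarrow> nat) \<Rightarrow> nat \<Rightarrow> (nat \<Rightarrow> nat) \<Rightarrow> nat \<Rightarrow> (nat \<Rightarrow> nat) \<Rightarrow> nat
    \<Rightarrow> triple multiset \<Rightarrow> real" where
  "swap_pi I lam J mu K rho n T =
     (1 / fact n) *
     ((\<Prod>i=1..I. fact (lam i)) * (\<Prod>j=1..J. fact (mu j)) * (\<Prod>k=1..K. fact (rho k))) /
     (\<Prod>i=1..I. \<Prod>j=1..J. \<Prod>k=1..K. fact (count T (i,j,k)))"

end

theory Submission
  imports Defs
begin


definition projs :: "triple multiset \<Rightarrow> nat multiset \<times> nat multiset \<times> nat multiset" where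
  "projs X = (image_mset fst X, image_mset (fst \<circ> snd) X, image_mset (snd \<circ> snd) X)"

definition mv :: "triple multiset \<Rightarrow> triple multiset \<Rightarrow> bool" where
  "mv X Y \<longleftrightarrow> (\<exists>t1\<in>#X. \<exists>t2\<in>#X. \<exists>r\<in>{1,2,3::nat}. Y = swap_step X t1 t2 r)"

lemma swap_coord_inv:
  "swap_coord r (fst (swap_coord r t1 t2)) (snd (swap_coord r t1 t2)) = (t1, t2)"
  by (cases t1; cases t2) auto

lemma swap_coord_ne:
  "fst (swap_coord r t1 t2) = snd (swap_coord r t1 t2) \<longleftrightarrow> t1 = t2"
  by (cases t1; cases t2) auto

lemma swap_coord_projs:
  "{#fst (fst (swap_coord r t1 t2)), fst (snd (swap_coord r t1 t2))#} = {#fst t1, fst t2#}"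
  "{#fst (snd (fst (swap_coord r t1 t2))), fst (snd (snd (swap_coord r t1 t2)))#} = {#fst (snd t1), fst (snd t2)#}"
  "{#snd (snd (fst (swap_coord r t1 t2))), snd (snd (snd (swap_coord r t1 t2)))#} = {#snd (snd t1), snd (snd t2)#}"
  by (cases t1; cases t2; auto simp: add_mset_commute)+

lemma pair_sub: "t1 \<in># X \<Longrightarrow> t2 \<in># X \<Longrightarrow> t1 \<noteq> t2 \<Longrightarrow> {#t1, t2#} \<subseteq># X"
  by (simp add: insert_subset_eq_iff in_diff_count)

lemma step_decomp:
  assumes "t1 \<in># X" "t2 \<in># X" "t1 \<noteq> t2"
  shows "X = (X - {#t1, t2#}) + {#t1, t2#}"
    "swap_step X t1 t2 r = (X - {#t1, t2#}) + {#fst (swap_coord r t1 t2), snd (swap_coord r t1 t2)#}"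
  using pair_sub[OF assms] assms(3) subset_mset.diff_add[of "{#t1, t2#}" X]
  by (auto simp: swap_step_def simp del: subset_mset.diff_add)

lemma step_projs:
  assumes "t1 \<in># X" "t2 \<in># X"
  shows "projs (swap_step X t1 t2 r) = projs X"
proof (cases "t1 = t2")
  case True then show ?thesis by (simp add: swap_step_def)
next
  case False
  note d = step_decomp[OF assms False]
  show ?thesis
    apply (subst (2) d(1))
    apply (subst d(2))
    using swap_coord_projs[of r t1 t2] by (simp add: projs_def add_mset_commute)
qed

lemma step_mem:
  assumes "t1 \<in># X" "t2 \<in># X" "t1 \<noteq> t2"
  shows "fst (swap_coord r t1 t2) \<in># swap_step X t1 t2 r"
  using step_decomp(2)[OF assms, of r] by simp

lemma mv_add: assumes "mv X Y" shows "mv (add_mset t X) (add_mset t Y)"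
proof -
  obtain t1 t2 r where h: "t1 \<in># X" "t2 \<in># X" "r \<in> {1,2,3::nat}" "Y = swap_step X t1 t2 r"
    using assms unfolding mv_def by blast
  have "swap_step (add_mset t X) t1 t2 r = add_mset t Y"
  proof (cases "t1 = t2")
    case True then show ?thesis using h by (simp add: swap_step_def)
  next
    case False
    have s: "{#t1, t2#} \<subseteq># X" using pair_sub[OF h(1,2) False] .
    have "add_mset t X - {#t1, t2#} = add_mset t (X - {#t1, t2#})"
    proof (rule multiset_eqI)
      fix x
      have "count {#t1, t2#} x \<le> count X x" using s by (rule mset_subset_eq_count)
      then show "count (add_mset t X - {#t1, t2#}) x = count (add_mset t (X - {#t1, t2#})) x"
        by (auto split: if_splits)
    qed
    then show ?thesis using h False by (simp add: swap_step_def)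
  qed
  then have eq: "add_mset t Y = swap_step (add_mset t X) t1 t2 r" by simp
  have m1: "t1 \<in># add_mset t X" and m2: "t2 \<in># add_mset t X" using h(1,2) by simp_all
  show ?thesis unfolding mv_def using eq m1 m2 h(3) by blast
qed

lemma mv_rtrancl_add:
  assumes "(X, Y) \<in> {(A, B). mv A B}\<^sup>*"
  shows "(add_mset t X, add_mset t Y) \<in> {(A, B). mv A B}\<^sup>*"
  using assms
proof (induction rule: rtrancl_induct)
  case base then show ?case by simp
next
  case (step y z)
  have "mv y z" using step.hyps(2) by simp
  then have "(add_mset t y, add_mset t z) \<in> {(A, B). mv A B}" using mv_add by simp
  then show ?case by (rule rtrancl_into_rtrancl[OF step.IH])
qed

lemma mv_step:
  assumes "t1 \<in># A" "t2 \<in># A" "r \<in> {1,2,3::nat}"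
  shows "(A, swap_step A t1 t2 r) \<in> {(X, Y). mv X Y}"
  unfolding mv_def using assms by blast

lemma conn:
  "projs A = projs B \<Longrightarrow> (A, B) \<in> {(X, Y). mv X Y}\<^sup>*"
proof (induction B arbitrary: A rule: multiset_induct)
  case empty
  then show ?case by (simp add: projs_def)
next
  case (add t B)
  obtain i j k where t: "t = (i, j, k)" by (cases t) auto
  let ?R = "{(X, Y). mv X Y}"
  have "i \<in># image_mset fst A" using add.prems t by (simp add: projs_def)
  then obtain x y where xy: "(i, x, y) \<in># A" by auto
  have "j \<in># image_mset (fst \<circ> snd) A" using add.prems t by (simp add: projs_def)
  then obtain u w where uw: "(u, j, w) \<in># A" by auto
  obtain A1 where A1: "(A, A1) \<in> ?R\<^sup>*" "projs A1 = projs A" "(i, j, y) \<in># A1"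
  proof (cases "x = j")
    case True then show ?thesis using that xy by auto
  next
    case False
    let ?A1 = "swap_step A (i, x, y) (u, j, w) 2"
    have "(A, ?A1) \<in> ?R\<^sup>*" using mv_step[OF xy uw, of 2] by auto
    moreover have "projs ?A1 = projs A" using step_projs[OF xy uw] .
    moreover have "(i, j, y) \<in># ?A1" using step_mem[OF xy uw, of 2] False by simp
    ultimately show ?thesis using that by blast
  qed
  have "k \<in># image_mset (snd \<circ> snd) A1" using add.prems t A1(2) by (simp add: projs_def)
  then obtain p q where pq: "(p, q, k) \<in># A1" by auto
  obtain A2 where A2: "(A, A2) \<in> ?R\<^sup>*" "projs A2 = projs A" "t \<in># A2"
  proof (cases "y = k")
    case True then show ?thesis using that A1 t by auto
  next
    case False
    let ?A2 = "swap_step A1 (i, j, y) (p, q, k) 3"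
    have "(A1, ?A2) \<in> ?R\<^sup>*" using mv_step[OF A1(3) pq, of 3] by auto
    then have "(A, ?A2) \<in> ?R\<^sup>*" using A1(1) by simp
    moreover have "projs ?A2 = projs A" using step_projs[OF A1(3) pq] A1(2) by simp
    moreover have "t \<in># ?A2" using step_mem[OF A1(3) pq, of 3] False t by simp
    ultimately show ?thesis using that by blast
  qed
  define A' where "A' = A2 - {#t#}"
  have A2e: "A2 = add_mset t A'" using A2(3) by (simp add: A'_def)
  have "projs A' = projs B" using A2(2) add.prems unfolding A2e by (simp add: projs_def)
  then have "(A', B) \<in> ?R\<^sup>*" using add.IH by blast
  then have "(A2, add_mset t B) \<in> ?R\<^sup>*" unfolding A2e by (rule mv_rtrancl_add)
  then show ?case using A2(1) by simp
qed


lemma count_add': "count (add_mset x X) y = count X y + (if y = x then 1 else 0)"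
  by simp

lemma ind2:
  assumes "finite A" "finite B" "b \<in> A" "c \<in> B"
  shows "(\<Sum>j\<in>A. \<Sum>k\<in>B. if j = b \<and> k = c then 1 else 0) = (1::nat)"
proof -
  have "\<And>j. (\<Sum>k\<in>B. if j = b \<and> k = c then 1 else 0) = (if j = b then 1 else (0::nat))"
    using assms by (simp add: sum.delta')
  then show ?thesis using assms by (simp add: sum.delta')
qed

lemma marg1:
  "\<forall>x\<in>#(X::triple multiset). fst (snd x) \<in> {1..J} \<and> snd (snd x) \<in> {1..K} \<Longrightarrow>
   (\<Sum>j=1..J. \<Sum>k=1..K. count X (i,j,k)) = count (image_mset fst X) i"
proof (induction X)
  case empty then show ?case by simp
next
  case (add x X)
  obtain a b c where x: "x = (a,b,c)" by (cases x) auto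
  have bc: "b \<in> {1..J}" "c \<in> {1..K}" using add.prems x by auto
  have "(\<Sum>j=1..J. \<Sum>k=1..K. count (add_mset x X) (i,j,k))
      = (\<Sum>j=1..J. \<Sum>k=1..K. count X (i,j,k)) + (\<Sum>j=1..J. \<Sum>k=1..K. (if (i,j,k) = x then 1 else 0))"
    unfolding count_add' by (simp add: sum.distrib)
  also have "(\<Sum>j=1..J. \<Sum>k=1..K. (if (i,j,k) = x then 1 else 0)) = (if i = a then 1 else (0::nat))"
  proof (cases "i = a")
    case True
    have "(\<Sum>j=1..J. \<Sum>k=1..K. if j = b \<and> k = c then 1 else 0) = (1::nat)"
      by (rule ind2) (use bc in auto)
    then show ?thesis using True unfolding x by simp
  next
    case False then show ?thesis unfolding x by simp
  qed
  finally show ?case using add by (simp add: x)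
qed

lemma marg2:
  "\<forall>x\<in>#(X::triple multiset). fst x \<in> {1..I} \<and> snd (snd x) \<in> {1..K} \<Longrightarrow>
   (\<Sum>i=1..I. \<Sum>k=1..K. count X (i,j,k)) = count (image_mset (fst \<circ> snd) X) j"
proof (induction X)
  case empty then show ?case by simp
next
  case (add x X)
  obtain a b c where x: "x = (a,b,c)" by (cases x) auto
  have bc: "a \<in> {1..I}" "c \<in> {1..K}" using add.prems x by auto
  have "(\<Sum>i=1..I. \<Sum>k=1..K. count (add_mset x X) (i,j,k))
      = (\<Sum>i=1..I. \<Sum>k=1..K. count X (i,j,k)) + (\<Sum>i=1..I. \<Sum>k=1..K. (if (i,j,k) = x then 1 else 0))"
    unfolding count_add' by (simp add: sum.distrib)
  also have "(\<Sum>i=1..I. \<Sum>k=1..K. (if (i,j,k) = x then 1 else 0)) = (if j = b then 1 else (0::nat))"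
  proof (cases "j = b")
    case True
    have "(\<Sum>i=1..I. \<Sum>k=1..K. if i = a \<and> k = c then 1 else 0) = (1::nat)"
      by (rule ind2) (use bc in auto)
    then show ?thesis using True unfolding x by simp
  next
    case False then show ?thesis unfolding x by simp
  qed
  finally show ?case using add by (simp add: x)
qed

lemma marg3:
  "\<forall>x\<in>#(X::triple multiset). fst x \<in> {1..I} \<and> fst (snd x) \<in> {1..J} \<Longrightarrow>
   (\<Sum>i=1..I. \<Sum>j=1..J. count X (i,j,k)) = count (image_mset (snd \<circ> snd) X) k"
proof (induction X)
  case empty then show ?case by simp
next
  case (add x X)
  obtain a b c where x: "x = (a,b,c)" by (cases x) auto
  have bc: "a \<in> {1..I}" "b \<in> {1..J}" using add.prems x by auto
  have "(\<Sum>i=1..I. \<Sum>j=1..J. count (add_mset x X) (i,j,k))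
      = (\<Sum>i=1..I. \<Sum>j=1..J. count X (i,j,k)) + (\<Sum>i=1..I. \<Sum>j=1..J. (if (i,j,k) = x then 1 else 0))"
    unfolding count_add' by (simp add: sum.distrib)
  also have "(\<Sum>i=1..I. \<Sum>j=1..J. (if (i,j,k) = x then 1 else 0)) = (if k = c then 1 else (0::nat))"
  proof (cases "k = c")
    case True
    have "(\<Sum>i=1..I. \<Sum>j=1..J. if i = a \<and> j = b then 1 else 0) = (1::nat)"
      by (rule ind2) (use bc in auto)
    then show ?thesis using True unfolding x by simp
  next
    case False then show ?thesis unfolding x by simp
  qed
  finally show ?case using add by (simp add: x)
qed

lemma tables_box:
  "T \<in> tables I lam J mu K rho \<Longrightarrow> x \<in># T \<Longrightarrow> x \<in> {1..I} \<times> {1..J} \<times> {1..K}"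
  unfolding tables_def by (cases x) fastforce

lemma tables_count:
  assumes "T \<in> tables I lam J mu K rho"
  shows "count (image_mset fst T) i = (if i \<in> {1..I} then lam i else 0)"
    "count (image_mset (fst \<circ> snd) T) j = (if j \<in> {1..J} then mu j else 0)"
    "count (image_mset (snd \<circ> snd) T) k = (if k \<in> {1..K} then rho k else 0)"
proof -
  have box: "\<And>x. x \<in># T \<Longrightarrow> x \<in> {1..I} \<times> {1..J} \<times> {1..K}" using tables_box[OF assms] .
  show "count (image_mset fst T) i = (if i \<in> {1..I} then lam i else 0)"
  proof (cases "i \<in> {1..I}")
    case True
    then show ?thesis using assms marg1[of T J K i] box unfolding tables_def by force
  next
    case False
    then have "i \<notin># image_mset fst T" using box by force
    then have "count (image_mset fst T) i = 0" by (meson count_eq_zero_iff)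
    then show ?thesis using False by auto
  qed
  show "count (image_mset (fst \<circ> snd) T) j = (if j \<in> {1..J} then mu j else 0)"
  proof (cases "j \<in> {1..J}")
    case True
    then show ?thesis using assms marg2[of T I K j] box unfolding tables_def by force
  next
    case False
    then have "j \<notin># image_mset (fst \<circ> snd) T" using box by force
    then have "count (image_mset (fst \<circ> snd) T) j = 0" by (meson count_eq_zero_iff)
    then show ?thesis using False by auto
  qed
  show "count (image_mset (snd \<circ> snd) T) k = (if k \<in> {1..K} then rho k else 0)"
  proof (cases "k \<in> {1..K}")
    case True
    then show ?thesis using assms marg3[of T I J k] box unfolding tables_def by force
  next
    case False
    then have "k \<notin># image_mset (snd \<circ> snd) T" using box by force
    then have "count (image_mset (snd \<circ> snd) T) k = 0" by (meson count_eq_zero_iff)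
    then show ?thesis using False by auto
  qed
qed

lemma tables_projs_eq:
  assumes "T \<in> tables I lam J mu K rho" "T' \<in> tables I lam J mu K rho"
  shows "projs T = projs T'"
  unfolding projs_def using tables_count[OF assms(1)] tables_count[OF assms(2)]
  by (auto intro: multiset_eqI)

lemma tables_projs:
  assumes T: "T \<in> tables I lam J mu K rho" and p: "projs Y = projs T"
  shows "Y \<in> tables I lam J mu K rho"
proof -
  have p1: "image_mset fst Y = image_mset fst T"
   and p2: "image_mset (fst \<circ> snd) Y = image_mset (fst \<circ> snd) T"
   and p3: "image_mset (snd \<circ> snd) Y = image_mset (snd \<circ> snd) T"
    using p by (auto simp: projs_def)
  have c1: "\<And>i. count (image_mset fst Y) i = (if i \<in> {1..I} then lam i else 0)"
    using tables_count(1)[OF T] p1 by simp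
  have c2: "\<And>i. count (image_mset (fst \<circ> snd) Y) i = (if i \<in> {1..J} then mu i else 0)"
    using tables_count(2)[OF T] p2 by simp
  have c3: "\<And>i. count (image_mset (snd \<circ> snd) Y) i = (if i \<in> {1..K} then rho i else 0)"
    using tables_count(3)[OF T] p3 by simp
  have box: "\<forall>x\<in>#Y. fst x \<in> {1..I} \<and> fst (snd x) \<in> {1..J} \<and> snd (snd x) \<in> {1..K}"
  proof
    fix x assume x: "x \<in># Y"
    have "fst x \<in># image_mset fst Y" "(fst \<circ> snd) x \<in># image_mset (fst \<circ> snd) Y"
      "(snd \<circ> snd) x \<in># image_mset (snd \<circ> snd) Y" using x by auto
    then have "count (image_mset fst Y) (fst x) > 0" "count (image_mset (fst \<circ> snd) Y) (fst (snd x)) > 0"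
      "count (image_mset (snd \<circ> snd) Y) (snd (snd x)) > 0" by auto
    then show "fst x \<in> {1..I} \<and> fst (snd x) \<in> {1..J} \<and> snd (snd x) \<in> {1..K}"
      unfolding c1 c2 c3 by (auto split: if_splits)
  qed
  show ?thesis unfolding tables_def
  proof (intro CollectI conjI ballI)
    show "\<And>x. x \<in># Y \<Longrightarrow> case x of (i, j, k) \<Rightarrow> i \<in> {1..I} \<and> j \<in> {1..J} \<and> k \<in> {1..K}"
      using box by auto
    show "\<And>i. i \<in> {1..I} \<Longrightarrow> (\<Sum>j = 1..J. \<Sum>k = 1..K. count Y (i, j, k)) = lam i"
      using marg1[of Y J K] box c1 by auto
    show "\<And>j. j \<in> {1..J} \<Longrightarrow> (\<Sum>i = 1..I. \<Sum>k = 1..K. count Y (i, j, k)) = mu j"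
      using marg2[of Y I K] box c2 by auto
    show "\<And>k. k \<in> {1..K} \<Longrightarrow> (\<Sum>i = 1..I. \<Sum>j = 1..J. count Y (i, j, k)) = rho k"
      using marg3[of Y I J] box c3 by auto
  qed
qed

lemma mv_pos: assumes "mv X Y" shows "swap_P X Y > 0"
proof -
  obtain t1 t2 r where h: "t1 \<in># X" "t2 \<in># X" "r \<in> {1,2,3::nat}" "Y = swap_step X t1 t2 r"
    using assms unfolding mv_def by blast
  define f where "f = (\<lambda>a b r. if swap_step X a b r = Y then real (count X a * count X b) else 0)"
  have nn: "\<And>a b r. f a b r \<ge> 0" unfolding f_def by auto
  have "0 < f t1 t2 r" using h unfolding f_def by auto
  also have "f t1 t2 r \<le> (\<Sum>r\<in>{1,2,3::nat}. f t1 t2 r)"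
    using h(3) nn by (intro member_le_sum) auto
  also have "\<dots> \<le> (\<Sum>b\<in>set_mset X. \<Sum>r\<in>{1,2,3::nat}. f t1 b r)"
    using h(2) nn by (intro member_le_sum) (auto intro: sum_nonneg)
  also have "\<dots> \<le> (\<Sum>a\<in>set_mset X. \<Sum>b\<in>set_mset X. \<Sum>r\<in>{1,2,3::nat}. f a b r)"
    using h(1) nn by (intro member_le_sum) (auto intro: sum_nonneg)
  finally have num: "0 < (\<Sum>a\<in>set_mset X. \<Sum>b\<in>set_mset X. \<Sum>r\<in>{1,2,3::nat}. f a b r)" .
  have "size X > 0" using h(1) by (metis emptyE gr0I set_mset_empty size_eq_0_iff_empty)
  moreover have "swap_P X Y = (\<Sum>a\<in>set_mset X. \<Sum>b\<in>set_mset X. \<Sum>r\<in>{1,2,3::nat}. f a b r) / (3 * real (size X) ^ 2)"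
    unfolding swap_P_def f_def by simp
  moreover have den: "0 < 3 * real (size X) ^ 2" using \<open>size X > 0\<close> by (cases "X = {#}") auto
  ultimately show ?thesis using num divide_pos_pos by metis
qed


definition Dp :: "nat \<Rightarrow> nat \<Rightarrow> nat \<Rightarrow> triple multiset \<Rightarrow> real" where
  "Dp I J K T = (\<Prod>x\<in>{1..I}\<times>{1..J}\<times>{1..K}. fact (count T x))"

lemma Dp_eq: "(\<Prod>i=1..I. \<Prod>j=1..J. \<Prod>k=1..K. (fact (count T (i,j,k)) :: real)) = Dp I J K T"
  unfolding Dp_def by (simp add: prod.cartesian_product split_def)

lemma Dp_pos: "Dp I J K T > 0"
  unfolding Dp_def by (intro prod_pos) auto

lemma Dp_add:
  assumes "x \<in> {1..I}\<times>{1..J}\<times>{1..K}"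
  shows "Dp I J K (add_mset x a) = Dp I J K a * (count a x + 1)"
proof -
  let ?B = "{1..I}\<times>{1..J}\<times>{1..K}"
  have fin: "finite ?B" by simp
  have "Dp I J K (add_mset x a) = fact (count (add_mset x a) x) * (\<Prod>y\<in>?B - {x}. fact (count (add_mset x a) y))"
    unfolding Dp_def using prod.remove[OF fin assms] by blast
  also have "(\<Prod>y\<in>?B - {x}. fact (count (add_mset x a) y)) = (\<Prod>y\<in>?B - {x}. (fact (count a y) :: real))"
    by (intro prod.cong) auto
  also have "Dp I J K a = fact (count a x) * (\<Prod>y\<in>?B - {x}. fact (count a y))"
    unfolding Dp_def using prod.remove[OF fin assms] by blast
  ultimately show ?thesis by (simp add: algebra_simps)
qed

lemma weight:
  assumes "t1 \<noteq> t2" "s1 \<noteq> s2"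
    "t1 \<in> {1..I}\<times>{1..J}\<times>{1..K}" "t2 \<in> {1..I}\<times>{1..J}\<times>{1..K}"
    "s1 \<in> {1..I}\<times>{1..J}\<times>{1..K}" "s2 \<in> {1..I}\<times>{1..J}\<times>{1..K}"
  shows "real (count (add_mset t1 (add_mset t2 a)) t1 * count (add_mset t1 (add_mset t2 a)) t2)
           * Dp I J K (add_mset s1 (add_mset s2 a))
       = real (count (add_mset s1 (add_mset s2 a)) s1 * count (add_mset s1 (add_mset s2 a)) s2)
           * Dp I J K (add_mset t1 (add_mset t2 a))"
  using assms by (simp add: Dp_add algebra_simps)

definition Snum :: "triple multiset \<Rightarrow> triple multiset \<Rightarrow> real" where
  "Snum T T' = (\<Sum>t1\<in>set_mset T. \<Sum>t2\<in>set_mset T. \<Sum>r\<in>{1,2,3::nat}.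
        if swap_step T t1 t2 r = T' then real (count T t1 * count T t2) else 0)"

definition Zs :: "triple multiset \<Rightarrow> triple multiset \<Rightarrow> (triple \<times> triple \<times> nat) set" where
  "Zs T T' = {z \<in> set_mset T \<times> set_mset T \<times> {1,2,3}. swap_step T (fst z) (fst (snd z)) (snd (snd z)) = T'}"

lemma Snum_eq: "Snum T T' = (\<Sum>z\<in>Zs T T'. real (count T (fst z) * count T (fst (snd z))))"
proof -
  have "Snum T T' = (\<Sum>(t1,t2,r)\<in>set_mset T \<times> set_mset T \<times> {1,2,3::nat}.
      if swap_step T t1 t2 r = T' then real (count T t1 * count T t2) else 0)"
    unfolding Snum_def sum.cartesian_product by (rule refl)
  also have "\<dots> = (\<Sum>z\<in>set_mset T \<times> set_mset T \<times> {1,2,3::nat}.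
      if swap_step T (fst z) (fst (snd z)) (snd (snd z)) = T' then real (count T (fst z) * count T (fst (snd z))) else 0)"
    by (rule sum.cong) (auto simp: split_def)
  also have "\<dots> = (\<Sum>z\<in>Zs T T'. real (count T (fst z) * count T (fst (snd z))))"
    unfolding Zs_def by (subst sum.inter_filter) auto
  finally show ?thesis .
qed

definition phi :: "triple \<times> triple \<times> nat \<Rightarrow> triple \<times> triple \<times> nat" where
  "phi z = (fst (swap_coord (snd (snd z)) (fst z) (fst (snd z))),
            snd (swap_coord (snd (snd z)) (fst z) (fst (snd z))), snd (snd z))"

lemma phi_phi: "phi (phi z) = z"
  unfolding phi_def using swap_coord_inv[of "snd (snd z)" "fst z" "fst (snd z)"]
  by (cases z) auto

lemma Zs_map:
  assumes "z \<in> Zs T T'" "T \<noteq> T'"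
  shows "phi z \<in> Zs T' T"
    "fst z \<noteq> fst (snd z)"
    "fst (phi z) \<noteq> fst (snd (phi z))"
    "T = add_mset (fst z) (add_mset (fst (snd z)) (T - {#fst z, fst (snd z)#}))"
    "T' = add_mset (fst (phi z)) (add_mset (fst (snd (phi z))) (T - {#fst z, fst (snd z)#}))"
proof -
  obtain t1 t2 r where z: "z = (t1, t2, r)" by (cases z) auto
  have h: "t1 \<in># T" "t2 \<in># T" "r \<in> {1,2,3}" "swap_step T t1 t2 r = T'"
    using assms(1) unfolding Zs_def z by auto
  show ne: "fst z \<noteq> fst (snd z)" using h(4) assms(2) unfolding z by (auto simp: swap_step_def)
  then have ne': "t1 \<noteq> t2" using z by simp
  define s1 where "s1 = fst (swap_coord r t1 t2)"
  define s2 where "s2 = snd (swap_coord r t1 t2)"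
  have pz: "phi z = (s1, s2, r)" unfolding phi_def z s1_def s2_def by simp
  have sne: "s1 \<noteq> s2" using swap_coord_ne[of r t1 t2] ne' unfolding s1_def s2_def by simp
  then show "fst (phi z) \<noteq> fst (snd (phi z))" using pz by simp
  note d = step_decomp[OF h(1,2) ne']
  define a where "a = T - {#t1, t2#}"
  have Ta: "T = add_mset t1 (add_mset t2 a)" using d(1) unfolding a_def by simp
  have T'a: "T' = add_mset s1 (add_mset s2 a)" using d(2)[of r] h(4) unfolding a_def s1_def s2_def by simp
  show "T = add_mset (fst z) (add_mset (fst (snd z)) (T - {#fst z, fst (snd z)#}))"
    using Ta z a_def by simp
  show "T' = add_mset (fst (phi z)) (add_mset (fst (snd (phi z))) (T - {#fst z, fst (snd z)#}))"
    using T'a pz z a_def by simp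
  have inv: "swap_coord r s1 s2 = (t1, t2)" unfolding s1_def s2_def by (rule swap_coord_inv)
  have "swap_step T' s1 s2 r = T"
  proof -
    have "T' - {#s1, s2#} = a" unfolding T'a by simp
    then show ?thesis using sne inv Ta unfolding swap_step_def by (simp add: add_mset_commute)
  qed
  moreover have "s1 \<in># T'" "s2 \<in># T'" using T'a by auto
  ultimately show "phi z \<in> Zs T' T" unfolding Zs_def pz using h(3) by auto
qed

lemma Snum_balance:
  assumes T: "T \<in> tables I lam J mu K rho" and T': "T' \<in> tables I lam J mu K rho" and ne: "T \<noteq> T'"
  shows "Snum T T' * Dp I J K T' = Snum T' T * Dp I J K T"
proof -
  let ?w = "\<lambda>M z. real (count M (fst z) * count M (fst (snd z)))"
  have "Snum T T' * Dp I J K T' = (\<Sum>z\<in>Zs T T'. ?w T z * Dp I J K T')"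
    unfolding Snum_eq by (simp add: sum_distrib_right)
  also have "\<dots> = (\<Sum>z\<in>Zs T' T. ?w T' z * Dp I J K T)"
  proof (rule sum.reindex_bij_witness[where i = phi and j = phi])
    show "\<And>a. phi (phi a) = a" by (rule phi_phi)
    show "\<And>a. phi (phi a) = a" by (rule phi_phi)
    show "\<And>a. a \<in> Zs T T' \<Longrightarrow> phi a \<in> Zs T' T" using Zs_map(1) ne by blast
    show "\<And>a. a \<in> Zs T' T \<Longrightarrow> phi a \<in> Zs T T'" using Zs_map(1) ne by metis
    fix z assume z: "z \<in> Zs T T'"
    note m = Zs_map[OF z ne]
    have mem: "fst z \<in># T" "fst (snd z) \<in># T" using z unfolding Zs_def by auto
    have mem': "fst (phi z) \<in># T'" "fst (snd (phi z)) \<in># T'" using m(1) unfolding Zs_def by auto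
    show "?w T' (phi z) * Dp I J K T = ?w T z * Dp I J K T'"
      apply (subst (1 2 3) m(4))
      apply (subst (1 2 3) m(5))
      using weight[OF m(2) m(3) tables_box[OF T mem(1)] tables_box[OF T mem(2)]
          tables_box[OF T' mem'(1)] tables_box[OF T' mem'(2)]] by simp
  qed
  also have "\<dots> = Snum T' T * Dp I J K T"
    unfolding Snum_eq by (simp add: sum_distrib_right)
  finally show ?thesis .
qed

theorem theorem5p1:
  fixes n I J K :: nat and lam mu rho :: "nat \<Rightarrow> nat"
  assumes "is_partition n I lam" and "is_partition n J mu" and "is_partition n K rho"
  shows "(\<forall>T\<in>tables I lam J mu K rho. \<forall>T'\<in>tables I lam J mu K rho.
            (T, T') \<in> {(A, B). A \<in> tables I lam J mu K rho \<and> swap_P A B > 0}\<^sup>*)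
       \<and> (\<forall>T\<in>tables I lam J mu K rho. \<forall>T'\<in>tables I lam J mu K rho.
            swap_pi I lam J mu K rho n T * swap_P T T' =
            swap_pi I lam J mu K rho n T' * swap_P T' T)"
proof -
  let ?Tb = "tables I lam J mu K rho"
  let ?R = "{(A, B). A \<in> ?Tb \<and> swap_P A B > 0}"
  have c: "\<forall>T\<in>?Tb. \<forall>T'\<in>?Tb. (T, T') \<in> ?R\<^sup>*"
  proof (intro ballI)
    fix T T' assume T: "T \<in> ?Tb" and T': "T' \<in> ?Tb"
    have "(T, T') \<in> {(X, Y). mv X Y}\<^sup>*" using conn[OF tables_projs_eq[OF T T']] .
    then have "T' \<in> ?Tb \<and> (T, T') \<in> ?R\<^sup>*"
    proof (induction rule: rtrancl_induct)
      case base show ?case using T by simp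
    next
      case (step y z)
      have y12: "y \<in> ?Tb \<and> (T, y) \<in> ?R\<^sup>*" using step.IH .
      have y3: "mv y z" using step.hyps(2) by simp
      note y = conjunct1[OF y12] conjunct2[OF y12] y3
      have "projs z = projs y" using y(3) step_projs unfolding mv_def by blast
      then have "z \<in> ?Tb" using tables_projs[OF y(1)] by simp
      moreover have yz: "(y, z) \<in> ?R" using y(1) mv_pos[OF y(3)] by blast
      ultimately show ?case using rtrancl_into_rtrancl[OF y(2) yz] by blast
    qed
    then show "(T, T') \<in> ?R\<^sup>*" by simp
  qed
  have r: "\<forall>T\<in>?Tb. \<forall>T'\<in>?Tb. swap_pi I lam J mu K rho n T * swap_P T T' =
            swap_pi I lam J mu K rho n T' * swap_P T' T"
  proof (intro ballI)
    fix T T' assume T: "T \<in> ?Tb" and T': "T' \<in> ?Tb"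
    show "swap_pi I lam J mu K rho n T * swap_P T T' = swap_pi I lam J mu K rho n T' * swap_P T' T"
    proof (cases "T = T'")
      case True then show ?thesis by simp
    next
      case False
      have "image_mset fst T = image_mset fst T'" using tables_projs_eq[OF T T'] by (simp add: projs_def)
      then have sz: "size T' = size T" by (metis size_image_mset)
      define C :: real where "C = (1 / fact n) * ((\<Prod>i=1..I. fact (lam i)) * (\<Prod>j=1..J. fact (mu j)) * (\<Prod>k=1..K. fact (rho k)))"
      have pi: "\<And>M. swap_pi I lam J mu K rho n M = C / Dp I J K M"
        unfolding swap_pi_def C_def Dp_eq by simp
      have P: "\<And>A B. swap_P A B = Snum A B / (3 * real (size A) ^ 2)"
        unfolding swap_P_def Snum_def by simp
      have bal: "Snum T T' * Dp I J K T' = Snum T' T * Dp I J K T"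
        using Snum_balance[OF T T' False] .
      have q: "Snum T T' / Dp I J K T = Snum T' T / Dp I J K T'"
        using bal Dp_pos[of I J K T] Dp_pos[of I J K T'] by (simp add: frac_eq_eq)
      have e: "\<And>D S x. C / D * (S / x) = C * (S / D) / x" by simp
      show ?thesis unfolding pi P sz e q ..
    qed
  qed
  show ?thesis using c r by blast
qed

end
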